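(* Every finite poset $X$ of dimension at most one, i.e. one in which there are no elements $x<y<z$, is cofibrant in the model structure on $\mathbf{Pos}$.
   Context: The model structure on $\mathbf{Pos}$: a map $f$ of posets is a weak equivalence/fibration iff it is so as a functor in the Thomason model structure on $\mathbf{Cat}$ (where $F$ is a weak equivalence/fibration iff $\mathrm{Ex}^2NF$ is one in the Kan–Quillen model structure on $\mathbf{sSet}$); cofibrations are the maps with the left lifting property against acyclic fibrations; a poset is cofibrant if $\emptyset\to X$ is a cofibration. *)

theory Defs
  imports Main
begin

definition is_poset :: "'a set \<Rightarrow> ('a \<Rightarrow> 'a \<Rightarrow> bool) \<Rightarrow> bool" where
  "is_poset P le \<longleftrightarrow>
     (\<forall>x\<in>P. le x x) \<and>
     (\<forall>x\<in>P. \<forall>y\<in>P. le x y \<and> le y x \<longrightarrow> x = y) \<and>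
     (\<forall>x\<in>P. \<forall>y\<in>P. \<forall>z\<in>P. le x y \<and> le y z \<longrightarrow> le x z)"

definition poset_map :: "'a set \<Rightarrow> ('a \<Rightarrow> 'a \<Rightarrow> bool) \<Rightarrow> 'b set \<Rightarrow> ('b \<Rightarrow> 'b \<Rightarrow> bool)
    \<Rightarrow> ('a \<Rightarrow> 'b) \<Rightarrow> bool" where
  "poset_map P leP Q leQ f \<longleftrightarrow>
     (\<forall>x\<in>P. f x \<in> Q) \<and> (\<forall>x\<in>P. \<forall>y\<in>P. leP x y \<longrightarrow> leQ (f x) (f y))"

definition dim_le_one :: "'a set \<Rightarrow> ('a \<Rightarrow> 'a \<Rightarrow> bool) \<Rightarrow> bool" where
  "dim_le_one P le \<longleftrightarrow>
     \<not> (\<exists>x\<in>P. \<exists>y\<in>P. \<exists>z\<in>P. le x y \<and> x \<noteq> y \<and> le y z \<and> y \<noteq> z)"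

text \<open>sd1 n: poset (under inclusion) of nondegenerate simplices of Delta^n,
  i.e. nonempty subsets of [n]; Sd Delta^n is its nerve.
  sd2 n: poset of nonempty chains in sd1 n; Sd^2 Delta^n is its nerve.
  Since the nerve is fully faithful and Ex is right adjoint to Sd,
  (Ex^2 N P)_n = Hom(Sd^2 Delta^n, N P) = monotone maps sd2 n -> P.
  We represent such n-simplices extensionally (undefined outside sd2 n).\<close>

definition sd1 :: "nat \<Rightarrow> nat set set" where
  "sd1 n = {S. S \<subseteq> {..n} \<and> S \<noteq> {}}"

definition sd2 :: "nat \<Rightarrow> nat set set set" where
  "sd2 n = {C. C \<subseteq> sd1 n \<and> C \<noteq> {} \<and> (\<forall>S\<in>C. \<forall>T\<in>C. S \<subseteq> T \<or> T \<subseteq> S)}"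

definition ex2N :: "'a set \<Rightarrow> ('a \<Rightarrow> 'a \<Rightarrow> bool) \<Rightarrow> nat \<Rightarrow> (nat set set \<Rightarrow> 'a) set" where
  "ex2N P le n =
     {x. (\<forall>C\<in>sd2 n. x C \<in> P) \<and>
         (\<forall>C\<in>sd2 n. \<forall>D\<in>sd2 n. C \<subseteq> D \<longrightarrow> le (x C) (x D)) \<and>
         (\<forall>C. C \<notin> sd2 n \<longrightarrow> x C = undefined)}"

definition simp_op :: "(nat \<Rightarrow> nat) \<Rightarrow> nat \<Rightarrow> (nat set set \<Rightarrow> 'a) \<Rightarrow> (nat set set \<Rightarrow> 'a)" where
  "simp_op \<theta> m x = (\<lambda>C. if C \<in> sd2 m then x ((\<lambda>S. \<theta> ` S) ` C) else undefined)"

text \<open>Face map d_i : X_(m+1) -> X_m, induced by the coface delta_i : [m] -> [m+1].\<close>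

definition face :: "nat \<Rightarrow> nat \<Rightarrow> (nat set set \<Rightarrow> 'a) \<Rightarrow> (nat set set \<Rightarrow> 'a)" where
  "face m i x = simp_op (\<lambda>j. if j < i then j else Suc j) m x"

definition ex2N_map :: "('a \<Rightarrow> 'b) \<Rightarrow> nat \<Rightarrow> (nat set set \<Rightarrow> 'a) \<Rightarrow> (nat set set \<Rightarrow> 'b)" where
  "ex2N_map f n x = (\<lambda>C. if C \<in> sd2 n then f (x C) else undefined)"

text \<open>A map of posets f is an acyclic fibration iff Ex^2 N f is an acyclic Kan fibration,
  i.e. (Kan--Quillen) has the right lifting property against all boundary inclusions
  dSimplex^n -> Delta^n. A map dSimplex^0 = empty -> X is trivial; for n = m+1 >= 1
  a map dSimplex^n -> X is a family x_0..x_n of m-simplices with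
  d_i x_j = d_(j-1) x_i for i < j.\<close>

definition acyclic_fibration :: "'a set \<Rightarrow> ('a \<Rightarrow> 'a \<Rightarrow> bool) \<Rightarrow> 'b set \<Rightarrow> ('b \<Rightarrow> 'b \<Rightarrow> bool)
    \<Rightarrow> ('a \<Rightarrow> 'b) \<Rightarrow> bool" where
  "acyclic_fibration A leA B leB f \<longleftrightarrow>
     (\<forall>y\<in>ex2N B leB 0. \<exists>z\<in>ex2N A leA 0. ex2N_map f 0 z = y) \<and>
     (\<forall>m xs y.
        (\<forall>i\<le>Suc m. xs i \<in> ex2N A leA m) \<and>
        (\<forall>i j. i < j \<and> j \<le> Suc m \<and> 0 < m \<longrightarrow>
               face (m - 1) i (xs j) = face (m - 1) (j - 1) (xs i)) \<and>
        y \<in> ex2N B leB (Suc m) \<and>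
        (\<forall>i\<le>Suc m. face m i y = ex2N_map f m (xs i))
        \<longrightarrow> (\<exists>z\<in>ex2N A leA (Suc m).
               (\<forall>i\<le>Suc m. face m i z = xs i) \<and> ex2N_map f (Suc m) z = y))"

text \<open>Left lifting property of empty -> X against a map of posets p : A -> B.\<close>

definition lifts_against :: "'x set \<Rightarrow> ('x \<Rightarrow> 'x \<Rightarrow> bool) \<Rightarrow> 'a set \<Rightarrow> ('a \<Rightarrow> 'a \<Rightarrow> bool)
    \<Rightarrow> 'b set \<Rightarrow> ('b \<Rightarrow> 'b \<Rightarrow> bool) \<Rightarrow> ('a \<Rightarrow> 'b) \<Rightarrow> bool" where
  "lifts_against X leX A leA B leB p \<longleftrightarrow>
     (\<forall>g. poset_map X leX B leB g \<longrightarrow>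
        (\<exists>h. poset_map X leX A leA h \<and> (\<forall>x\<in>X. p (h x) = g x)))"

end

theory Submission
  imports Defs
begin

definition im :: "(nat \<Rightarrow> nat) \<Rightarrow> nat set set \<Rightarrow> nat set set" where
  "im f C = (\<lambda>S. f ` S) ` C"

definition dl :: "nat \<Rightarrow> nat \<Rightarrow> nat" where
  "dl i = (\<lambda>j. if j < i then j else Suc j)"

lemma face_alt: "face m i x = simp_op (dl i) m x"
  by (simp add: face_def dl_def)

lemma simp_op_app: "simp_op f m x C = (if C \<in> sd2 m then x (im f C) else undefined)"
  by (simp add: simp_op_def im_def)

lemma sd2_im_gen:
  assumes "C \<in> sd2 d" "\<Union>C \<subseteq> Dm" "f ` Dm \<subseteq> {..k}"
  shows "im f C \<in> sd2 k"
proof -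
  have "\<forall>S\<in>C. f ` S \<subseteq> {..k} \<and> f ` S \<noteq> {}"
    using assms unfolding sd2_def sd1_def by blast
  moreover have "\<forall>S\<in>C. \<forall>T\<in>C. f ` S \<subseteq> f ` T \<or> f ` T \<subseteq> f ` S"
  proof (intro ballI)
    fix S T assume "S \<in> C" "T \<in> C"
    then have "S \<subseteq> T \<or> T \<subseteq> S" using assms(1) unfolding sd2_def by blast
    thus "f ` S \<subseteq> f ` T \<or> f ` T \<subseteq> f ` S" by (meson image_mono)
  qed
  moreover have "C \<noteq> {}" using assms(1) unfolding sd2_def by blast
  ultimately show ?thesis unfolding sd2_def sd1_def im_def by auto
qed

lemma Union_im: "\<Union>(im f C) = f ` \<Union>C"
  by (auto simp: im_def)

lemma im_im: "im f (im g C) = im (f \<circ> g) C"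
  by (simp add: im_def image_image image_comp)

lemma im_mono: "C \<subseteq> D \<Longrightarrow> im f C \<subseteq> im f D"
  by (auto simp: im_def)

lemma dl_comm: "i < j \<Longrightarrow> dl j \<circ> dl i = dl i \<circ> dl (j - 1)"
  by (auto simp: dl_def fun_eq_iff)

lemma sd2_props: "C \<in> sd2 n \<Longrightarrow> \<Union>C \<subseteq> {..n} \<and> \<Union>C \<noteq> {} \<and> finite (\<Union>C)"
proof -
  assume a: "C \<in> sd2 n"
  have 1: "\<Union>C \<subseteq> {..n}" using a unfolding sd2_def sd1_def by blast
  have "\<exists>S\<in>C. S \<noteq> {}" using a unfolding sd2_def sd1_def by blast
  hence "\<Union>C \<noteq> {}" by blast
  with 1 show ?thesis using finite_subset by blast
qed

lemma sd2_vertex: "j \<le> n \<Longrightarrow> {{j}} \<in> sd2 n"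
  unfolding sd2_def sd1_def by auto

lemma sd2_top: "{{..n}} \<in> sd2 n"
  unfolding sd2_def sd1_def by auto

lemma sd2_vtop: "j \<le> n \<Longrightarrow> {{j},{..n}} \<in> sd2 n"
  unfolding sd2_def sd1_def by auto

lemma sd2_sing_unique: "C \<in> sd2 n \<Longrightarrow> {i} \<in> C \<Longrightarrow> {j} \<in> C \<Longrightarrow> i = j"
  unfolding sd2_def by blast

lemma dl_range: "j \<le> m \<Longrightarrow> dl i j \<le> Suc m"
  by (simp add: dl_def)

lemma sd2_dl: "C \<in> sd2 k \<Longrightarrow> im (dl i) C \<in> sd2 (Suc k)"
  by (rule sd2_im_gen[of C k "{..k}"]) (auto simp: sd2_props dl_range)

lemma ext_step:
  fixes A :: "'a set" and B :: "'b set" and p :: "'a \<Rightarrow> 'b"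
    and G :: "nat set set \<Rightarrow> 'b" and H :: "nat set set \<Rightarrow> 'a"
  assumes AF: "acyclic_fibration A leA B leB p"
    and sig: "\<sigma> \<subseteq> {..n}" "card \<sigma> = Suc d" "d = Suc m"
    and GB: "\<forall>C\<in>sd2 n. G C \<in> B"
    and Gmono: "\<forall>C\<in>sd2 n. \<forall>D\<in>sd2 n. C \<subseteq> D \<longrightarrow> leB (G C) (G D)"
    and Hval: "\<forall>C\<in>sd2 n. card (\<Union>C) \<le> d \<longrightarrow> H C \<in> A \<and> p (H C) = G C"
    and Hmono: "\<forall>C\<in>sd2 n. \<forall>D\<in>sd2 n. C \<subseteq> D \<longrightarrow> card (\<Union>D) \<le> d \<longrightarrow> leA (H C) (H D)"
  shows "\<exists>K. (\<forall>C\<in>sd2 n. \<Union>C \<subseteq> \<sigma> \<longrightarrow> K C \<in> A \<and> p (K C) = G C) \<and>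
             (\<forall>C\<in>sd2 n. \<forall>D\<in>sd2 n. C \<subseteq> D \<longrightarrow> \<Union>D \<subseteq> \<sigma> \<longrightarrow> leA (K C) (K D)) \<and>
             (\<forall>C\<in>sd2 n. \<Union>C \<subseteq> \<sigma> \<longrightarrow> \<Union>C \<noteq> \<sigma> \<longrightarrow> K C = H C)"
proof -
  have fins: "finite \<sigma>" using sig(1) finite_subset by blast
  obtain th where bij: "bij_betw th {..d} \<sigma>"
    using ex_bij_betw_nat_finite[OF fins] sig(2) by (metis atLeast0LessThan lessThan_Suc_atMost)
  have thimg: "th ` {..d} = \<sigma>" and thinj: "inj_on th {..d}" using bij by (auto simp: bij_betw_def)
  define ti where "ti = inv_into {..d} th"
  have thti: "\<And>s. s \<in> \<sigma> \<Longrightarrow> th (ti s) = s" unfolding ti_def using thimg by (metis f_inv_into_f)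
  have tiR: "\<And>s. s \<in> \<sigma> \<Longrightarrow> ti s \<in> {..d}" unfolding ti_def using thimg by (metis inv_into_into)
  have thn: "th ` {..d} \<subseteq> {..n}" using thimg sig(1) by simp
  have imth: "im th C \<in> sd2 n" if "C \<in> sd2 d" for C
    using sd2_im_gen[OF that _ thn] sd2_props[OF that] by blast
  have card_imth: "card (\<Union>(im th C)) = card (\<Union>C)" if "C \<in> sd2 d" for C
  proof -
    have "inj_on th (\<Union>C)" using inj_on_subset[OF thinj] sd2_props[OF that] by blast
    thus ?thesis by (simp add: Union_im card_image)
  qed
  have cardd: "card (\<Union>(im th (im (dl i) C))) \<le> d" if "C \<in> sd2 m" for C i
  proof -
    have "card (\<Union>(im th (im (dl i) C))) = card (\<Union>(im (dl i) C))"
      using card_imth sd2_dl[OF that] sig(3) by simp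
    also have "\<dots> = card (dl i ` \<Union>C)" by (simp add: Union_im)
    also have "\<dots> \<le> card (\<Union>C)" using sd2_props[OF that] card_image_le by blast
    also have "\<dots> \<le> card {..m}" using sd2_props[OF that] by (intro card_mono) auto
    finally show ?thesis using sig(3) by simp
  qed
  have imn: "im th (im (dl i) C) \<in> sd2 n" if "C \<in> sd2 m" for C i
    using imth sd2_dl[OF that] sig(3) by simp
  define xs where "xs = (\<lambda>i C. if C \<in> sd2 m then H (im th (im (dl i) C)) else undefined)"
  define y where "y = (\<lambda>C. if C \<in> sd2 d then G (im th C) else undefined)"
  have xs_ex: "\<forall>i\<le>Suc m. xs i \<in> ex2N A leA m"
  proof (intro allI impI)
    fix i assume "i \<le> Suc m"
    show "xs i \<in> ex2N A leA m"
      unfolding ex2N_def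
    proof (intro CollectI conjI ballI allI impI)
      fix C assume C: "C \<in> sd2 m"
      show "xs i C \<in> A" using Hval imn[OF C] cardd[OF C] C by (simp add: xs_def)
    next
      fix C D assume C: "C \<in> sd2 m" and D: "D \<in> sd2 m" and CD: "C \<subseteq> D"
      have "im th (im (dl i) C) \<subseteq> im th (im (dl i) D)" using CD by (intro im_mono)
      then show "leA (xs i C) (xs i D)" using Hmono imn[OF C] imn[OF D] cardd[OF D] C D
        by (simp add: xs_def)
    next
      fix C assume "C \<notin> sd2 m" then show "xs i C = undefined" by (simp add: xs_def)
    qed
  qed
  have compat: "\<forall>i j. i < j \<and> j \<le> Suc m \<and> 0 < m \<longrightarrow>
      face (m - 1) i (xs j) = face (m - 1) (j - 1) (xs i)"
  proof (intro allI impI)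
    fix i j assume ij: "i < j \<and> j \<le> Suc m \<and> 0 < m"
    show "face (m - 1) i (xs j) = face (m - 1) (j - 1) (xs i)"
    proof (rule ext)
      fix C
      show "face (m - 1) i (xs j) C = face (m - 1) (j - 1) (xs i) C"
      proof (cases "C \<in> sd2 (m - 1)")
        case True
        have m: "Suc (m - 1) = m" using ij by simp
        have c1: "im (dl i) C \<in> sd2 m" "im (dl (j - 1)) C \<in> sd2 m" using sd2_dl[OF True] m by metis+
        have "im (dl j) (im (dl i) C) = im (dl i) (im (dl (j - 1)) C)"
          using dl_comm[of i j] ij by (simp add: im_im)
        then show ?thesis using True c1 by (simp add: face_alt simp_op_app xs_def)
      next
        case False
        then show ?thesis by (simp add: face_alt simp_op_app)
      qed
    qed
  qed
  have y_ex: "y \<in> ex2N B leB (Suc m)"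
    unfolding ex2N_def
  proof (intro CollectI conjI ballI allI impI)
    fix C assume C: "C \<in> sd2 (Suc m)"
    show "y C \<in> B" using GB imth C sig(3) by (simp add: y_def)
  next
    fix C D assume C: "C \<in> sd2 (Suc m)" and D: "D \<in> sd2 (Suc m)" and CD: "C \<subseteq> D"
    show "leB (y C) (y D)" using Gmono imth C D im_mono[OF CD] sig(3) by (simp add: y_def)
  next
    fix C assume "C \<notin> sd2 (Suc m)" then show "y C = undefined" using sig(3) by (simp add: y_def)
  qed
  have yface: "\<forall>i\<le>Suc m. face m i y = ex2N_map p m (xs i)"
  proof (intro allI impI ext)
    fix i C assume "i \<le> Suc m"
    show "face m i y C = ex2N_map p m (xs i) C"
    proof (cases "C \<in> sd2 m")
      case True
      then show ?thesis using sd2_dl[OF True] Hval imn[OF True] cardd[OF True] sig(3)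
        by (simp add: face_alt simp_op_app y_def xs_def ex2N_map_def)
    next
      case False
      then show ?thesis by (simp add: face_alt simp_op_app ex2N_map_def)
    qed
  qed
  obtain z where z: "z \<in> ex2N A leA (Suc m)" "\<forall>i\<le>Suc m. face m i z = xs i"
      "ex2N_map p (Suc m) z = y"
  proof -
    have "\<forall>m xs y.
        (\<forall>i\<le>Suc m. xs i \<in> ex2N A leA m) \<and>
        (\<forall>i j. i < j \<and> j \<le> Suc m \<and> 0 < m \<longrightarrow>
               face (m - 1) i (xs j) = face (m - 1) (j - 1) (xs i)) \<and>
        y \<in> ex2N B leB (Suc m) \<and>
        (\<forall>i\<le>Suc m. face m i y = ex2N_map p m (xs i))
        \<longrightarrow> (\<exists>z\<in>ex2N A leA (Suc m).
               (\<forall>i\<le>Suc m. face m i z = xs i) \<and> ex2N_map p (Suc m) z = y)"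
      using AF unfolding acyclic_fibration_def by blast
    then have "\<exists>z\<in>ex2N A leA (Suc m). (\<forall>i\<le>Suc m. face m i z = xs i) \<and> ex2N_map p (Suc m) z = y"
      using xs_ex compat y_ex yface by blast
    then show ?thesis using that by blast
  qed
  have zA: "z D \<in> A \<and> p (z D) = G (im th D)" if D: "D \<in> sd2 d" for D
  proof -
    have "z D \<in> A" using z(1) D sig(3) unfolding ex2N_def by blast
    moreover have "ex2N_map p (Suc m) z D = y D" using z(3) by simp
    ultimately show ?thesis using D sig(3) by (simp add: ex2N_map_def y_def)
  qed
  have zmono: "leA (z D) (z E)" if "D \<in> sd2 d" "E \<in> sd2 d" "D \<subseteq> E" for D E
    using z(1) that sig(3) unfolding ex2N_def by blast
  have zbd: "z D = H (im th D)" if D: "D \<in> sd2 d" and nD: "\<Union>D \<noteq> {..d}" for D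
  proof -
    obtain i where i: "i \<le> d" "i \<notin> \<Union>D" using sd2_props[OF D] nD by blast
    define sg where "sg = (\<lambda>k::nat. if k < i then k else k - 1)"
    define D' where "D' = im sg D"
    have D'sd: "D' \<in> sd2 m" unfolding D'_def
      by (rule sd2_im_gen[of D d "{..d} - {i}"]) (use D sd2_props[OF D] i sig(3) in \<open>auto simp: sg_def\<close>)
    have e: "(dl i \<circ> sg) ` S = S" if "S \<in> D" for S
    proof -
      have "(dl i \<circ> sg) ` S = id ` S"
      proof (rule image_cong)
        fix k assume "k \<in> S"
        then have "k \<noteq> i" using that i by blast
        then show "(dl i \<circ> sg) k = id k" by (auto simp: dl_def sg_def)
      qed simp
      then show ?thesis by simp
    qed
    have "im (dl i) D' = D"
    proof -
      have "im (dl i) D' = (\<lambda>S. (dl i \<circ> sg) ` S) ` D" unfolding D'_def im_im by (simp add: im_def)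
      also have "\<dots> = (\<lambda>S. S) ` D" by (rule image_cong) (use e in auto)
      finally show ?thesis by simp
    qed
    moreover have "face m i z D' = xs i D'" using z(2) i sig(3) by simp
    ultimately show ?thesis using D'sd by (simp add: face_alt simp_op_app xs_def)
  qed
  have tiC: "im ti C \<in> sd2 d \<and> im th (im ti C) = C" if C: "C \<in> sd2 n" "\<Union>C \<subseteq> \<sigma>" for C
  proof
    show "im ti C \<in> sd2 d" by (rule sd2_im_gen[OF C(1) C(2)]) (use tiR in auto)
    have e: "(th \<circ> ti) ` S = S" if "S \<in> C" for S
    proof -
      have "(th \<circ> ti) ` S = id ` S"
        by (rule image_cong) (use that C(2) thti in auto)
      then show ?thesis by simp
    qed
    have "im th (im ti C) = (\<lambda>S. (th \<circ> ti) ` S) ` C" unfolding im_im by (simp add: im_def)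
    also have "\<dots> = (\<lambda>S. S) ` C" by (rule image_cong) (use e in auto)
    finally show "im th (im ti C) = C" by simp
  qed
  show ?thesis
  proof (intro exI[of _ "\<lambda>C. z (im ti C)"] conjI ballI impI allI)
    fix C assume C: "C \<in> sd2 n" "\<Union>C \<subseteq> \<sigma>"
    show "z (im ti C) \<in> A" "p (z (im ti C)) = G C" using zA tiC[OF C] by metis+
  next
    fix C D assume C: "C \<in> sd2 n" and D: "D \<in> sd2 n" and CD: "C \<subseteq> D" and Ds: "\<Union>D \<subseteq> \<sigma>"
    have Cs: "\<Union>C \<subseteq> \<sigma>" using CD Ds by blast
    show "leA (z (im ti C)) (z (im ti D))"
      using zmono tiC[OF C Cs] tiC[OF D Ds] im_mono[OF CD] by blast
  next
    fix C assume C: "C \<in> sd2 n" "\<Union>C \<subseteq> \<sigma>" and ne: "\<Union>C \<noteq> \<sigma>"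
    have "\<Union>(im ti C) \<noteq> {..d}"
    proof
      assume "\<Union>(im ti C) = {..d}"
      then have "th ` \<Union>(im ti C) = \<sigma>" using thimg by simp
      then have "\<Union>(im th (im ti C)) = \<sigma>" by (simp add: Union_im)
      then show False using tiC[OF C] ne by simp
    qed
    then show "z (im ti C) = H C" using zbd tiC[OF C] by metis
  qed
qed

lemma sd2_card1:
  assumes "C \<in> sd2 n" "card (\<Union>C) \<le> 1"
  shows "\<exists>j\<le>n. C = {{j}}"
proof -
  have P: "\<Union>C \<subseteq> {..n}" "\<Union>C \<noteq> {}" "finite (\<Union>C)" using sd2_props[OF assms(1)] by auto
  then have "card (\<Union>C) \<noteq> 0" by simp
  then have "card (\<Union>C) = 1" using assms(2) by linarith
  then obtain j where j: "\<Union>C = {j}" using card_1_singletonE by blast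
  have ne: "\<forall>S\<in>C. S \<noteq> {}" using assms(1) unfolding sd2_def sd1_def by auto
  have "\<forall>S\<in>C. S = {j}"
  proof
    fix S assume "S \<in> C"
    then have "S \<subseteq> {j}" "S \<noteq> {}" using j ne by auto
    then show "S = {j}" by (simp add: subset_singleton_iff)
  qed
  then have "C \<subseteq> {{j}}" by auto
  moreover have "C \<noteq> {}" using assms(1) unfolding sd2_def by simp
  ultimately have "C = {{j}}" by (simp add: subset_singleton_iff)
  moreover have "j \<le> n" using P(1) j by auto
  ultimately show ?thesis by blast
qed

lemma V_lemma:
  fixes A :: "'a set" and B :: "'b set" and p :: "'a \<Rightarrow> 'b"
    and G :: "nat set set \<Rightarrow> 'b" and a :: "nat \<Rightarrow> 'a"
  assumes AF: "acyclic_fibration A leA B leB p"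
    and posA: "is_poset A leA"
    and GB: "\<forall>C\<in>sd2 n. G C \<in> B"
    and Gmono: "\<forall>C\<in>sd2 n. \<forall>D\<in>sd2 n. C \<subseteq> D \<longrightarrow> leB (G C) (G D)"
    and av: "\<forall>j\<le>n. a j \<in> A \<and> p (a j) = G {{j}}"
  shows "\<exists>H. (\<forall>C\<in>sd2 n. H C \<in> A \<and> p (H C) = G C) \<and>
             (\<forall>C\<in>sd2 n. \<forall>D\<in>sd2 n. C \<subseteq> D \<longrightarrow> leA (H C) (H D)) \<and> (\<forall>j\<le>n. H {{j}} = a j)"
proof -
  define Inv where "Inv d H \<longleftrightarrow>
     (\<forall>C\<in>sd2 n. card (\<Union>C) \<le> d \<longrightarrow> H C \<in> A \<and> p (H C) = G C) \<and>
     (\<forall>C\<in>sd2 n. \<forall>D\<in>sd2 n. C \<subseteq> D \<longrightarrow> card (\<Union>D) \<le> d \<longrightarrow> leA (H C) (H D)) \<and>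
     (\<forall>j\<le>n. H {{j}} = a j)" for d H
  have base: "Inv 1 (\<lambda>C. a (Min (\<Union>C)))"
    unfolding Inv_def
  proof (intro conjI ballI allI impI)
    fix C assume "C \<in> sd2 n" "card (\<Union>C) \<le> 1"
    then obtain j where "j \<le> n" "C = {{j}}" using sd2_card1 by blast
    then show "a (Min (\<Union>C)) \<in> A" "p (a (Min (\<Union>C))) = G C" using av by simp_all
  next
    fix C D assume C: "C \<in> sd2 n" and D: "D \<in> sd2 n" and CD: "C \<subseteq> D" and cD: "card (\<Union>D) \<le> 1"
    then obtain j where j: "j \<le> n" "D = {{j}}" using sd2_card1 by blast
    have "C \<noteq> {}" using C unfolding sd2_def by blast
    then have "C = D" using CD j by blast
    have "leA (a j) (a j)" using posA av j(1) unfolding is_poset_def by blast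
    then show "leA (a (Min (\<Union>C))) (a (Min (\<Union>D)))"
      using \<open>C = D\<close> j(2) by simp
  next
    fix j assume "j \<le> n" then show "a (Min (\<Union>{{j}})) = a j" by simp
  qed
  have step: "\<exists>H'. Inv (Suc d) H'" if IH: "Inv d H" and d1: "1 \<le> d" for d H
  proof -
    define Sig where "Sig = {\<sigma>. \<sigma> \<subseteq> {..n} \<and> card \<sigma> = Suc d}"
    define Pr where "Pr \<sigma> K \<longleftrightarrow> (\<forall>C\<in>sd2 n. \<Union>C \<subseteq> \<sigma> \<longrightarrow> K C \<in> A \<and> p (K C) = G C) \<and>
             (\<forall>C\<in>sd2 n. \<forall>D\<in>sd2 n. C \<subseteq> D \<longrightarrow> \<Union>D \<subseteq> \<sigma> \<longrightarrow> leA (K C) (K D)) \<and>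
             (\<forall>C\<in>sd2 n. \<Union>C \<subseteq> \<sigma> \<longrightarrow> \<Union>C \<noteq> \<sigma> \<longrightarrow> K C = H C)" for \<sigma> and K :: "nat set set \<Rightarrow> 'a"
    have IHs: "(\<forall>C\<in>sd2 n. card (\<Union>C) \<le> d \<longrightarrow> H C \<in> A \<and> p (H C) = G C) \<and>
     (\<forall>C\<in>sd2 n. \<forall>D\<in>sd2 n. C \<subseteq> D \<longrightarrow> card (\<Union>D) \<le> d \<longrightarrow> leA (H C) (H D)) \<and>
     (\<forall>j\<le>n. H {{j}} = a j)" using IH by (simp only: Inv_def)
    note IH1 = conjunct1[OF IHs] and IH2 = conjunct1[OF conjunct2[OF IHs]]
      and IH3 = conjunct2[OF conjunct2[OF IHs]]
    have "\<forall>\<sigma>\<in>Sig. \<exists>K. Pr \<sigma> K"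
    proof
      fix \<sigma> assume "\<sigma> \<in> Sig"
      then have s: "\<sigma> \<subseteq> {..n}" "card \<sigma> = Suc d" unfolding Sig_def by auto
      have d': "d = Suc (d - 1)" using d1 by simp
      show "\<exists>K. Pr \<sigma> K"
        unfolding Pr_def by (rule ext_step[OF AF s(1) s(2) d' GB Gmono IH1 IH2])
    qed
    then have "\<exists>KK. \<forall>\<sigma>\<in>Sig. Pr \<sigma> (KK \<sigma>)" by (rule bchoice)
    then obtain KK where KK: "\<forall>\<sigma>\<in>Sig. Pr \<sigma> (KK \<sigma>)" ..
    have KKs: "(\<forall>C\<in>sd2 n. \<Union>C \<subseteq> \<sigma> \<longrightarrow> KK \<sigma> C \<in> A \<and> p (KK \<sigma> C) = G C) \<and>
             (\<forall>C\<in>sd2 n. \<forall>D\<in>sd2 n. C \<subseteq> D \<longrightarrow> \<Union>D \<subseteq> \<sigma> \<longrightarrow> leA (KK \<sigma> C) (KK \<sigma> D)) \<and>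
             (\<forall>C\<in>sd2 n. \<Union>C \<subseteq> \<sigma> \<longrightarrow> \<Union>C \<noteq> \<sigma> \<longrightarrow> KK \<sigma> C = H C)" if "\<sigma> \<in> Sig" for \<sigma>
      using bspec[OF KK that] unfolding Pr_def by assumption
    have KK1: "KK \<sigma> C \<in> A \<and> p (KK \<sigma> C) = G C" if "\<sigma> \<in> Sig" "C \<in> sd2 n" "\<Union>C \<subseteq> \<sigma>" for \<sigma> C
      using conjunct1[OF KKs[OF that(1)], rule_format, OF that(2) that(3)] .
    have KK2: "leA (KK \<sigma> C) (KK \<sigma> D)" if "\<sigma> \<in> Sig" "C \<in> sd2 n" "D \<in> sd2 n" "C \<subseteq> D" "\<Union>D \<subseteq> \<sigma>" for \<sigma> C D
      using conjunct1[OF conjunct2[OF KKs[OF that(1)]], rule_format, OF that(2) that(3) that(4) that(5)] .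
    have KK3: "KK \<sigma> C = H C" if "\<sigma> \<in> Sig" "C \<in> sd2 n" "\<Union>C \<subseteq> \<sigma>" "\<Union>C \<noteq> \<sigma>" for \<sigma> C
      using conjunct2[OF conjunct2[OF KKs[OF that(1)]], rule_format, OF that(2) that(3) that(4)] .
    define H' where "H' C = (if card (\<Union>C) = Suc d then KK (\<Union>C) C else H C)" for C
    have inSig: "\<Union>C \<in> Sig" if "C \<in> sd2 n" "card (\<Union>C) = Suc d" for C
      using that sd2_props[OF that(1)] unfolding Sig_def by auto
    have "Inv (Suc d) H'"
      unfolding Inv_def
    proof (intro conjI ballI allI impI)
      fix C assume C: "C \<in> sd2 n" and c: "card (\<Union>C) \<le> Suc d"
      show "H' C \<in> A" "p (H' C) = G C"
      proof -
        have "H' C \<in> A \<and> p (H' C) = G C"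
        proof (cases "card (\<Union>C) = Suc d")
          case True
          then show ?thesis using KK1[OF inSig[OF C True] C] by (simp add: H'_def)
        next
          case False
          then show ?thesis using IH1 C c by (simp add: H'_def)
        qed
        then show "H' C \<in> A" "p (H' C) = G C" by auto
      qed
    next
      fix C D assume C: "C \<in> sd2 n" and D: "D \<in> sd2 n" and CD: "C \<subseteq> D" and c: "card (\<Union>D) \<le> Suc d"
      have sub: "\<Union>C \<subseteq> \<Union>D" using CD by blast
      have fD: "finite (\<Union>D)" using sd2_props[OF D] by blast
      have cc: "card (\<Union>C) \<le> card (\<Union>D)" using card_mono[OF fD sub] .
      show "leA (H' C) (H' D)"
      proof (cases "card (\<Union>D) = Suc d")
        case True
        note sD = inSig[OF D True]
        show ?thesis
        proof (cases "card (\<Union>C) = Suc d")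
          case True2: True
          then have "\<Union>C = \<Union>D" using card_subset_eq[OF fD sub] True by simp
          then show ?thesis using KK2[OF sD C D CD] True True2 by (simp add: H'_def)
        next
          case False
          then have "\<Union>C \<noteq> \<Union>D" using True by auto
          then have "KK (\<Union>D) C = H C" using KK3[OF sD C sub] by blast
          then show ?thesis using KK2[OF sD C D CD] True False by (simp add: H'_def)
        qed
      next
        case False
        then show ?thesis using IH2 C D CD c cc by (simp add: H'_def)
      qed
    next
      fix j assume j: "j \<le> n"
      have "card (\<Union>{{j}}) \<noteq> Suc d" using d1 by simp
      then show "H' {{j}} = a j" using IH3 j by (simp add: H'_def)
    qed
    then show ?thesis by blast
  qed
  have all: "\<exists>H. Inv (Suc k) H" for k
  proof (induction k)
    case 0 then show ?case using base by auto
  next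
    case (Suc k)
    then obtain H where "Inv (Suc k) H" by blast
    then show ?case using step[of "Suc k" H] by auto
  qed
  obtain H where H: "Inv (Suc n) H" using all by blast
  have cn: "card (\<Union>C) \<le> Suc n" if "C \<in> sd2 n" for C
  proof -
    have "card (\<Union>C) \<le> card {..n}" using sd2_props[OF that] by (intro card_mono) auto
    then show ?thesis by simp
  qed
  have Hs: "(\<forall>C\<in>sd2 n. card (\<Union>C) \<le> Suc n \<longrightarrow> H C \<in> A \<and> p (H C) = G C) \<and>
     (\<forall>C\<in>sd2 n. \<forall>D\<in>sd2 n. C \<subseteq> D \<longrightarrow> card (\<Union>D) \<le> Suc n \<longrightarrow> leA (H C) (H D)) \<and>
     (\<forall>j\<le>n. H {{j}} = a j)" using H by (simp only: Inv_def)
  have H1: "\<forall>C\<in>sd2 n. H C \<in> A \<and> p (H C) = G C"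
  proof
    fix C assume C: "C \<in> sd2 n"
    show "H C \<in> A \<and> p (H C) = G C" using conjunct1[OF Hs, rule_format, OF C cn[OF C]] .
  qed
  have H2: "\<forall>C\<in>sd2 n. \<forall>D\<in>sd2 n. C \<subseteq> D \<longrightarrow> leA (H C) (H D)"
  proof (intro ballI impI)
    fix C D assume C: "C \<in> sd2 n" and D: "D \<in> sd2 n" and CD: "C \<subseteq> D"
    show "leA (H C) (H D)" using conjunct1[OF conjunct2[OF Hs], rule_format, OF C D CD cn[OF D]] .
  qed
  have H3: "\<forall>j\<le>n. H {{j}} = a j" using conjunct2[OF conjunct2[OF Hs]] .
  show ?thesis using H1 H2 H3 by (intro exI[of _ H] conjI)
qed


lemma surj0:
  assumes AF: "acyclic_fibration A leA B leB p" and posB: "is_poset B leB" and b: "b \<in> B"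
  shows "\<exists>a\<in>A. p a = b"
proof -
  define y where "y = (\<lambda>C::nat set set. if C \<in> sd2 0 then b else undefined)"
  have bb: "leB b b" using b posB unfolding is_poset_def by blast
  have y: "y \<in> ex2N B leB 0" unfolding ex2N_def y_def using b bb by auto
  have "\<forall>y\<in>ex2N B leB 0. \<exists>z\<in>ex2N A leA 0. ex2N_map p 0 z = y"
    using AF unfolding acyclic_fibration_def by (rule conjunct1)
  then obtain z where z: "z \<in> ex2N A leA 0" "ex2N_map p 0 z = y" using y by blast
  have v: "{{0}} \<in> sd2 0" using sd2_vertex by simp
  have "z {{0}} \<in> A" using z(1) v unfolding ex2N_def by blast
  moreover have "p (z {{0}}) = b" using fun_cong[OF z(2), of "{{0}}"] v by (simp add: ex2N_map_def y_def)
  ultimately show ?thesis by blast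
qed

lemma CC_lemma:
  fixes A :: "'a set" and B :: "'b set" and p :: "'a \<Rightarrow> 'b" and w :: "nat \<Rightarrow> 'a"
  assumes AF: "acyclic_fibration A leA B leB p"
    and posA: "is_poset A leA" and posB: "is_poset B leB"
    and pm: "poset_map A leA B leB p"
    and n1: "1 \<le> n" and wA: "\<forall>j\<le>n. w j \<in> A" and b: "b \<in> B"
    and bw: "\<forall>j\<le>n. leB b (p (w j))"
  shows "\<exists>a U. a \<in> A \<and> p a = b \<and>
     (\<forall>j\<le>n. U j \<in> A \<and> p (U j) = p (w j) \<and> leA (w j) (U j) \<and> leA a (U j))"
proof -
  define vx where "vx C = (SOME j. j \<le> n \<and> {j} \<in> C)" for C :: "nat set set"
  define G where "G C = (if \<exists>j\<le>n. {j} \<in> C then p (w (vx C)) else b)" for C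
  have vxC: "vx C = j" if "C \<in> sd2 n" "j \<le> n" "{j} \<in> C" for C j
  proof -
    have "vx C \<le> n \<and> {vx C} \<in> C" unfolding vx_def
      by (rule someI[of "\<lambda>j. j \<le> n \<and> {j} \<in> C" j]) (use that in simp)
    then show ?thesis using sd2_sing_unique[OF that(1)] that(3) by blast
  qed
  have Gv: "G C = p (w j)" if "C \<in> sd2 n" "j \<le> n" "{j} \<in> C" for C j
  proof -
    have "\<exists>j\<le>n. {j} \<in> C" using that by blast
    then show ?thesis using vxC[OF that] by (simp add: G_def)
  qed
  have Gnv: "G C = b" if "\<not> (\<exists>j\<le>n. {j} \<in> C)" for C
    unfolding G_def by (rule if_not_P[OF that])
  have pwB: "p (w j) \<in> B" if "j \<le> n" for j
    using pm wA that unfolding poset_map_def by blast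
  have reflB: "leB x x" if "x \<in> B" for x using posB that unfolding is_poset_def by blast
  have GB: "\<forall>C\<in>sd2 n. G C \<in> B"
  proof
    fix C assume C: "C \<in> sd2 n"
    show "G C \<in> B"
    proof (cases "\<exists>j\<le>n. {j} \<in> C")
      case True
      then obtain j where "j \<le> n" "{j} \<in> C" by blast
      then show ?thesis using Gv[OF C] pwB by simp
    next
      case False
      then show ?thesis using Gnv b by simp
    qed
  qed
  have Gmono: "\<forall>C\<in>sd2 n. \<forall>D\<in>sd2 n. C \<subseteq> D \<longrightarrow> leB (G C) (G D)"
  proof (intro ballI impI)
    fix C D assume C: "C \<in> sd2 n" and D: "D \<in> sd2 n" and CD: "C \<subseteq> D"
    show "leB (G C) (G D)"
    proof (cases "\<exists>j\<le>n. {j} \<in> C")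
      case True
      then obtain j where j: "j \<le> n" "{j} \<in> C" by blast
      then have "{j} \<in> D" using CD by blast
      then show ?thesis using Gv[OF C j] Gv[OF D j(1)] reflB pwB j(1) by simp
    next
      case False
      then have GC: "G C = b" using Gnv by simp
      show ?thesis
      proof (cases "\<exists>j\<le>n. {j} \<in> D")
        case True
        then obtain j where j: "j \<le> n" "{j} \<in> D" by blast
        then show ?thesis using GC Gv[OF D j] bw by simp
      next
        case False
        then show ?thesis using GC Gnv reflB b by simp
      qed
    qed
  qed
  have av: "\<forall>j\<le>n. w j \<in> A \<and> p (w j) = G {{j}}"
  proof (intro allI impI conjI)
    fix j assume j: "j \<le> n"
    show "w j \<in> A" using wA j by simp
    show "p (w j) = G {{j}}" using Gv[OF sd2_vertex[OF j] j] by simp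
  qed
  obtain H where HH: "(\<forall>C\<in>sd2 n. H C \<in> A \<and> p (H C) = G C) \<and>
    (\<forall>C\<in>sd2 n. \<forall>D\<in>sd2 n. C \<subseteq> D \<longrightarrow> leA (H C) (H D)) \<and>
    (\<forall>j\<le>n. H {{j}} = w j)"
    using V_lemma[OF AF posA GB Gmono av] ..
  note H1 = conjunct1[OF HH] and H2 = conjunct1[OF conjunct2[OF HH]] and H3 = conjunct2[OF conjunct2[OF HH]]
  have tnv: "\<not> (\<exists>j\<le>n. {j} \<in> {{..n}})"
  proof
    assume "\<exists>j\<le>n. {j} \<in> {{..n}}"
    then obtain j where "{j} = {..n}" by blast
    then have "0 \<in> {j}" "1 \<in> {j}" using n1 by auto
    then show False by simp
  qed
  have aA: "H {{..n}} \<in> A" "p (H {{..n}}) = b"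
    using bspec[OF H1 sd2_top[of n]] Gnv[OF tnv] by auto
  have UU: "H {{j},{..n}} \<in> A \<and> p (H {{j},{..n}}) = p (w j) \<and> leA (w j) (H {{j},{..n}})
      \<and> leA (H {{..n}}) (H {{j},{..n}})" if j: "j \<le> n" for j
  proof (intro conjI)
    have m: "{{j},{..n}} \<in> sd2 n" using sd2_vtop[OF j] .
    show "H {{j},{..n}} \<in> A" using bspec[OF H1 m] by (rule conjunct1)
    show "p (H {{j},{..n}}) = p (w j)" using conjunct2[OF bspec[OF H1 m]] Gv[OF m j] by simp
    have "leA (H {{j}}) (H {{j},{..n}})" using H2[rule_format, OF sd2_vertex[OF j] m] by simp
    then show "leA (w j) (H {{j},{..n}})" using H3 j by simp
    show "leA (H {{..n}}) (H {{j},{..n}})" using H2[rule_format, OF sd2_top[of n] m] by simp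
  qed
  show ?thesis
    by (rule exI[of _ "H {{..n}}"], rule exI[of _ "\<lambda>j. H {{j},{..n}}"]) (use aA UU in simp)
qed

lemma pos_refl: "is_poset P le \<Longrightarrow> x \<in> P \<Longrightarrow> le x x"
  unfolding is_poset_def by blast
lemma pos_antisym: "is_poset P le \<Longrightarrow> x \<in> P \<Longrightarrow> y \<in> P \<Longrightarrow> le x y \<Longrightarrow> le y x \<Longrightarrow> x = y"
  unfolding is_poset_def by blast
lemma pos_trans: "is_poset P le \<Longrightarrow> x \<in> P \<Longrightarrow> y \<in> P \<Longrightarrow> z \<in> P \<Longrightarrow> le x y \<Longrightarrow> le y z \<Longrightarrow> le x z"
  unfolding is_poset_def by blast
lemma pm_in: "poset_map P leP Q leQ f \<Longrightarrow> x \<in> P \<Longrightarrow> f x \<in> Q"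
  unfolding poset_map_def by blast
lemma pm_mono: "poset_map P leP Q leQ f \<Longrightarrow> x \<in> P \<Longrightarrow> y \<in> P \<Longrightarrow> leP x y \<Longrightarrow> leQ (f x) (f y)"
  unfolding poset_map_def by blast
lemma dim_no: "dim_le_one P le \<Longrightarrow> x \<in> P \<Longrightarrow> y \<in> P \<Longrightarrow> z \<in> P \<Longrightarrow> le x y \<Longrightarrow> x \<noteq> y
    \<Longrightarrow> le y z \<Longrightarrow> y \<noteq> z \<Longrightarrow> False"
  unfolding dim_le_one_def by blast
lemma pos_sub: "is_poset P le \<Longrightarrow> Q \<subseteq> P \<Longrightarrow> is_poset Q le"
  unfolding is_poset_def by (meson subsetD)
lemma dim_sub: "dim_le_one P le \<Longrightarrow> Q \<subseteq> P \<Longrightarrow> dim_le_one Q le"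
  unfolding dim_le_one_def by (meson subsetD)
lemma pm_sub: "poset_map P leP R leR f \<Longrightarrow> Q \<subseteq> P \<Longrightarrow> poset_map Q leP R leR f"
  unfolding poset_map_def by (meson subsetD)

lemma main_ind:
  fixes A :: "'a set" and B :: "'b set" and p :: "'a \<Rightarrow> 'b" and X :: "'x set"
  assumes AF: "acyclic_fibration A leA B leB p"
    and posA: "is_poset A leA" and posB: "is_poset B leB"
    and pm: "poset_map A leA B leB p"
  shows "finite X \<Longrightarrow> is_poset X leX \<Longrightarrow> dim_le_one X leX \<Longrightarrow> lifts_against X leX A leA B leB p"
proof (induction "card X" arbitrary: X rule: less_induct)
  case less
  note finX = less.prems(1) and posX = less.prems(2) and dimX = less.prems(3)
  show ?case
  proof (cases "X = {}")
    case True
    then show ?thesis by (simp add: lifts_against_def poset_map_def)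
  next
    case False
    then obtain x0 where x0: "x0 \<in> X" by blast
    obtain x where xX: "x \<in> X" and xmin: "\<And>z. z \<in> X \<Longrightarrow> leX z x \<Longrightarrow> z = x"
    proof (cases "\<exists>x'\<in>X. leX x' x0 \<and> x' \<noteq> x0")
      case True
      then obtain x' where x': "x' \<in> X" "leX x' x0" "x' \<noteq> x0" by blast
      have "z = x'" if "z \<in> X" "leX z x'" for z
      proof (rule ccontr)
        assume "z \<noteq> x'"
        then show False using dim_no[OF dimX that(1) x'(1) x0 that(2) _ x'(2) x'(3)] by blast
      qed
      then show ?thesis using that x'(1) by blast
    next
      case False
      then show ?thesis using that x0 by blast
    qed
    define X' where "X' = X - {x}"
    have X'sub: "X' \<subseteq> X" unfolding X'_def by blast
    have cardX': "card X' < card X" unfolding X'_def by (rule card_Diff1_less[OF finX xX])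
    have IH: "lifts_against X' leX A leA B leB p"
      using less.hyps[OF cardX'] finite_subset[OF X'sub finX] pos_sub[OF posX X'sub] dim_sub[OF dimX X'sub]
      by blast
    show ?thesis
      unfolding lifts_against_def
    proof (intro allI impI)
      fix g assume g: "poset_map X leX B leB g"
      have g': "poset_map X' leX B leB g" using pm_sub[OF g X'sub] .
      obtain h' where h': "poset_map X' leX A leA h'" and h'g: "\<And>z. z \<in> X' \<Longrightarrow> p (h' z) = g z"
        using IH g' unfolding lifts_against_def by blast
      define J where "J = {y\<in>X. leX x y \<and> y \<noteq> x}"
      have JX': "J \<subseteq> X'" unfolding J_def X'_def by blast
      have gx: "g x \<in> B" using pm_in[OF g xX] .
      have xJ: "x \<notin> J" unfolding J_def by blast
      have build: "\<exists>h. poset_map X leX A leA h \<and> (\<forall>z\<in>X. p (h z) = g z)"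
        if aA: "a \<in> A" "p a = g x"
          and UJ: "\<And>z. z \<in> J \<Longrightarrow> U z \<in> A \<and> p (U z) = g z \<and> leA (h' z) (U z) \<and> leA a (U z)"
        for a U
      proof -
        define h where "h z = (if z = x then a else if z \<in> J then U z else h' z)" for z
        have hX': "h z = h' z" if "z \<in> X'" "z \<notin> J" for z
          using that unfolding h_def X'_def by auto
        have hA: "h z \<in> A" if "z \<in> X" for z
        proof (cases "z = x")
          case True then show ?thesis using aA by (simp add: h_def)
        next
          case False
          then have zX': "z \<in> X'" using that unfolding X'_def by blast
          show ?thesis
          proof (cases "z \<in> J")
            case True then show ?thesis using UJ False by (simp add: h_def)
          next
            case nJ: False
            then show ?thesis using hX'[OF zX' nJ] pm_in[OF h' zX'] by simp
          qed
        qed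
        have hp: "p (h z) = g z" if "z \<in> X" for z
        proof (cases "z = x")
          case True then show ?thesis using aA by (simp add: h_def)
        next
          case False
          then have zX': "z \<in> X'" using that unfolding X'_def by blast
          show ?thesis
          proof (cases "z \<in> J")
            case True then show ?thesis using UJ False by (simp add: h_def)
          next
            case nJ: False
            then show ?thesis using hX'[OF zX' nJ] h'g[OF zX'] by simp
          qed
        qed
        have hmono: "leA (h z1) (h z2)" if z1: "z1 \<in> X" and z2: "z2 \<in> X" and le: "leX z1 z2" for z1 z2
        proof (cases "z1 = x")
          case True
          show ?thesis
          proof (cases "z2 = x")
            case True2: True
            then show ?thesis using True pos_refl[OF posA aA(1)] by (simp add: h_def)
          next
            case False
            then have "z2 \<in> J" using z2 le True unfolding J_def by blast
            then show ?thesis using True False UJ by (simp add: h_def)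
          qed
        next
          case z1x: False
          have z2x: "z2 \<noteq> x" using xmin[OF z1] le z1x by blast
          have z1X': "z1 \<in> X'" and z2X': "z2 \<in> X'" using z1 z2 z1x z2x unfolding X'_def by auto
          have h'le: "leA (h' z1) (h' z2)" using pm_mono[OF h' z1X' z2X' le] .
          show ?thesis
          proof (cases "z2 \<in> J")
            case True
            show ?thesis
            proof (cases "z1 = z2")
              case True2: True
              then show ?thesis using pos_refl[OF posA hA[OF z2]] by simp
            next
              case False
              have z1J: "z1 \<notin> J"
              proof
                assume "z1 \<in> J"
                then have "leX x z1" using J_def by blast
                then show False using dim_no[OF dimX xX z1 z2 _ _ le False] z1x by blast
              qed
              have hz2: "h z2 = U z2" "leA (h' z2) (U z2)" "U z2 \<in> A" using True UJ z2x by (auto simp: h_def)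
              have "leA (h' z1) (U z2)"
                using pos_trans[OF posA pm_in[OF h' z1X'] pm_in[OF h' z2X'] hz2(3) h'le hz2(2)] .
              then show ?thesis using hX'[OF z1X' z1J] hz2(1) by simp
            qed
          next
            case False
            have z1J: "z1 \<notin> J"
            proof
              assume "z1 \<in> J"
              then have "leX x z1" using J_def by blast
              then have "leX x z2" using pos_trans[OF posX xX z1 z2 _ le] by blast
              then have "z2 \<in> J" using z2 z2x unfolding J_def by blast
              then show False using False by blast
            qed
            then show ?thesis using hX'[OF z1X' z1J] hX'[OF z2X' False] h'le by simp
          qed
        qed
        have "poset_map X leX A leA h" unfolding poset_map_def using hA hmono by blast
        then show ?thesis using hp by blast
      qed
      show "\<exists>h. poset_map X leX A leA h \<and> (\<forall>z\<in>X. p (h z) = g z)"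
      proof (cases "J = {}")
        case True
        obtain a where a: "a \<in> A" "p a = g x" using surj0[OF AF posB gx] by blast
        show ?thesis by (rule build[OF a, of "\<lambda>z. a"]) (use True in blast)
      next
        case False
        have finJ: "finite J" using finite_subset[OF JX'] finite_subset[OF X'sub finX] by blast
        define k where "k = card J"
        have k1: "1 \<le> k" using False finJ unfolding k_def by (simp add: Suc_leI card_gt_0_iff)
        obtain e where e: "bij_betw e {0..<k} J" using ex_bij_betw_nat_finite[OF finJ] unfolding k_def by blast
        have eJ: "e i \<in> J" if "i < k" for i using e that unfolding bij_betw_def by auto
        define w where "w j = h' (e (min j (k - 1)))" for j
        have wJ: "e (min j (k - 1)) \<in> J" for j using eJ k1 by simp
        have wA: "\<forall>j\<le>k. w j \<in> A"
          using wJ JX' pm_in[OF h'] unfolding w_def by blast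
        have bw: "\<forall>j\<le>k. leB (g x) (p (w j))"
        proof (intro allI impI)
          fix j assume "j \<le> k"
          have ej: "e (min j (k - 1)) \<in> J" using wJ .
          then have "leX x (e (min j (k - 1)))" "e (min j (k - 1)) \<in> X" unfolding J_def by auto
          then have "leB (g x) (g (e (min j (k - 1))))" using pm_mono[OF g xX] by blast
          moreover have "p (w j) = g (e (min j (k - 1)))" unfolding w_def using h'g ej JX' by blast
          ultimately show "leB (g x) (p (w j))" by simp
        qed
        obtain a U where aU: "a \<in> A" "p a = g x"
          and U: "\<forall>j\<le>k. U j \<in> A \<and> p (U j) = p (w j) \<and> leA (w j) (U j) \<and> leA a (U j)"
          using CC_lemma[OF AF posA posB pm k1 wA gx bw] by blast
        define idx where "idx = inv_into {0..<k} e"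
        have idx: "idx z < k" "e (idx z) = z" if "z \<in> J" for z
        proof -
          have "e ` {0..<k} = J" using e unfolding bij_betw_def by blast
          then have zi: "z \<in> e ` {0..<k}" using that by simp
          show "idx z < k" using inv_into_into[OF zi] unfolding idx_def by simp
          show "e (idx z) = z" using f_inv_into_f[OF zi] unfolding idx_def by simp
        qed
        show ?thesis
        proof (rule build[OF aU, of "\<lambda>z. U (idx z)"])
          fix z assume zJ: "z \<in> J"
          have i: "idx z \<le> k" "min (idx z) (k - 1) = idx z" using idx[OF zJ] by auto
          have wz: "w (idx z) = h' z" unfolding w_def using i(2) idx(2)[OF zJ] by simp
          have zX': "z \<in> X'" using zJ JX' by blast
          have Ui: "U (idx z) \<in> A \<and> p (U (idx z)) = p (w (idx z)) \<and> leA (w (idx z)) (U (idx z)) \<and> leA a (U (idx z))"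
            using U i(1) by blast
          then show "U (idx z) \<in> A \<and> p (U (idx z)) = g z \<and> leA (h' z) (U (idx z)) \<and> leA a (U (idx z))"
            using wz h'g[OF zX'] by simp
        qed
      qed
    qed
  qed
qed


theorem proposition6p4:
  fixes X :: "'x set" and leX :: "'x \<Rightarrow> 'x \<Rightarrow> bool"
    and A :: "'a set" and leA :: "'a \<Rightarrow> 'a \<Rightarrow> bool"
    and B :: "'b set" and leB :: "'b \<Rightarrow> 'b \<Rightarrow> bool"
    and p :: "'a \<Rightarrow> 'b"
  assumes "is_poset X leX" and "finite X" and "dim_le_one X leX"
    and "is_poset A leA" and "is_poset B leB"
    and "poset_map A leA B leB p" and "acyclic_fibration A leA B leB p"
  shows "lifts_against X leX A leA B leB p"
  by (rule main_ind[OF assms(7) assms(4) assms(5) assms(6) assms(2) assms(1) assms(3)])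

end
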